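(* Along the boundary curve $x=x_{\rm splg}(h)$, $$\lim_{h\to\infty}\frac{c^*(x_{\rm splg}(h),h)}{x_{\rm splg}(h)}=r,\qquad \lim_{h\to\infty}\pi^*(x_{\rm splg}(h),h)=\frac{(\mu-r)(1-\lambda)^{r_1-1}}{r\beta\sigma^2}.$$
   Context: Parameters $r>0$, $\mu>r$, $\sigma>0$, $\beta>0$, $\lambda\in(0,1)$, $\kappa=(\mu-r)/\sigma$, $r_{1,2}=\frac12(1\pm\sqrt{1+8r/\kappa^2})$. Define $C_6(h):=\frac{(1-\lambda)^{r_1-r_2}}{(r_1-r_2)\beta r}\Big[\frac{1}{1-r_2}e^{(\lambda-1)(1-r_2)\beta h}-\frac{\lambda}{\lambda(1-r_2)-(r_1-r_2)}e^{[\lambda(1-r_2)-(r_1-r_2)]\beta h}\Big]$ and $C_5(h):=\frac{(1-r_2)\kappa^2}{2(r_1-r_2)\beta r^2}[e^{(\lambda-1)(1-r_1)\beta h}-e^{\lambda(1-r_1)\beta h}]$, and $x_{\rm splg}(h):=-r_1C_5(h)(1-\lambda)^{r_1-1}e^{(\lambda-1)(r_1-1)\beta h}-r_2C_6(h)(1-\lambda)^{r_2-1}e^{(\lambda-1)(r_2-1)\beta h}+\frac hr$. On this curve the optimal feedback consumption is $c^*(x_{\rm splg}(h),h)=h$ and the optimal feedback portfolio is $\pi^*(x_{\rm splg}(h),h)=\frac{\mu-r}{\sigma^2}\big[\frac{2r}{\kappa^2}C_5(h)y^{r_1-1}+\frac{2r}{\kappa^2}C_6(h)y^{r_2-1}\big]$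 with $y=(1-\lambda)e^{(\lambda-1)\beta h}$ (these are the optimal controls of the problem $\sup\mathbb E[\int_0^\infty e^{-rt}(-\frac1\beta e^{-\beta(c_t-\lambda H_t)})dt]$ with $H_t$ the running maximum of consumption, wealth $dX=rXdt+\pi(\mu-r)dt+\pi\sigma dW-cdt$). *)

theory Defs
  imports Complex_Main
begin

definition kappa :: "real \<Rightarrow> real \<Rightarrow> real \<Rightarrow> real" where
  "kappa r \<mu> \<sigma> = (\<mu> - r) / \<sigma>"

definition root1 :: "real \<Rightarrow> real \<Rightarrow> real" where
  "root1 r \<kappa> = (1 + sqrt (1 + 8 * r / \<kappa>^2)) / 2"

definition root2 :: "real \<Rightarrow> real \<Rightarrow> real" where
  "root2 r \<kappa> = (1 - sqrt (1 + 8 * r / \<kappa>^2)) / 2"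

definition C6 :: "real \<Rightarrow> real \<Rightarrow> real \<Rightarrow> real \<Rightarrow> real \<Rightarrow> real \<Rightarrow> real" where
  "C6 r \<mu> \<sigma> \<beta> lam h =
    (let \<kappa> = kappa r \<mu> \<sigma>; r1 = root1 r \<kappa>; r2 = root2 r \<kappa> in
     (1 - lam) powr (r1 - r2) / ((r1 - r2) * \<beta> * r) *
     (1 / (1 - r2) * exp ((lam - 1) * (1 - r2) * \<beta> * h)
      - lam / (lam * (1 - r2) - (r1 - r2)) * exp ((lam * (1 - r2) - (r1 - r2)) * \<beta> * h)))"

definition C5 :: "real \<Rightarrow> real \<Rightarrow> real \<Rightarrow> real \<Rightarrow> real \<Rightarrow> real \<Rightarrow> real" where
  "C5 r \<mu> \<sigma> \<beta> lam h =
    (let \<kappa> = kappa r \<mu> \<sigma>; r1 = root1 r \<kappa>; r2 = root2 r \<kappa> in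
     (1 - r2) * \<kappa>^2 / (2 * (r1 - r2) * \<beta> * r^2) *
     (exp ((lam - 1) * (1 - r1) * \<beta> * h) - exp (lam * (1 - r1) * \<beta> * h)))"

definition x_splg :: "real \<Rightarrow> real \<Rightarrow> real \<Rightarrow> real \<Rightarrow> real \<Rightarrow> real \<Rightarrow> real" where
  "x_splg r \<mu> \<sigma> \<beta> lam h =
    (let \<kappa> = kappa r \<mu> \<sigma>; r1 = root1 r \<kappa>; r2 = root2 r \<kappa> in
     - r1 * C5 r \<mu> \<sigma> \<beta> lam h * (1 - lam) powr (r1 - 1) * exp ((lam - 1) * (r1 - 1) * \<beta> * h)
     - r2 * C6 r \<mu> \<sigma> \<beta> lam h * (1 - lam) powr (r2 - 1) * exp ((lam - 1) * (r2 - 1) * \<beta> * h)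
     + h / r)"

text \<open>Optimal feedback consumption evaluated on the boundary curve: c*(x_splg(h),h) = h.\<close>
definition c_star_splg :: "real \<Rightarrow> real" where
  "c_star_splg h = h"

definition pi_star_splg :: "real \<Rightarrow> real \<Rightarrow> real \<Rightarrow> real \<Rightarrow> real \<Rightarrow> real \<Rightarrow> real" where
  "pi_star_splg r \<mu> \<sigma> \<beta> lam h =
    (let \<kappa> = kappa r \<mu> \<sigma>; r1 = root1 r \<kappa>; r2 = root2 r \<kappa>;
         y = (1 - lam) * exp ((lam - 1) * \<beta> * h) in
     (\<mu> - r) / \<sigma>^2 *
     (2 * r / \<kappa>^2 * C5 r \<mu> \<sigma> \<beta> lam h * y powr (r1 - 1)
      + 2 * r / \<kappa>^2 * C6 r \<mu> \<sigma> \<beta> lam h * y powr (r2 - 1)))"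

end

theory Submission
  imports Defs "HOL-Real_Asymp.Real_Asymp"
begin

lemma comb5: fixes C K A B E X :: real
  shows "C = K * (A - B) \<Longrightarrow> A * E = 1 \<Longrightarrow> B * E = X \<Longrightarrow> C * E = K * (1 - X)"
  proof - assume a: "C = K * (A - B)" "A * E = 1" "B * E = X"
    have "C * E = K * ((A * E) - (B * E))" unfolding a(1) by (simp add: algebra_simps)
    then show ?thesis using a by simp qed

lemma comb6: fixes C K a b A B E X :: real
  shows "C = K * (a * A - b * B) \<Longrightarrow> A * E = 1 \<Longrightarrow> B * E = X \<Longrightarrow> C * E = K * (a - b * X)"
  proof - assume a: "C = K * (a * A - b * B)" "A * E = 1" "B * E = X"
    have "C * E = K * (a * (A * E) - b * (B * E))" unfolding a(1) by (simp add: algebra_simps)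
    then show ?thesis using a by simp qed

lemma lim1:
  fixes r c d g :: real
  assumes "r > 0" "g > 0"
  shows "((\<lambda>h. h / (h / r + c + d * exp (- g * h))) \<longlongrightarrow> r) at_top"
  using assms by real_asymp

lemma lim2:
  fixes c d g :: real
  assumes "g > 0"
  shows "((\<lambda>h. c + d * exp (- g * h)) \<longlongrightarrow> c) at_top"
  using assms by real_asymp

theorem corollary3p2:
  fixes r \<mu> \<sigma> \<beta> lam :: real
  assumes "r > 0" and "\<mu> > r" and "\<sigma> > 0" and "\<beta> > 0" and "0 < lam" and "lam < 1"
  shows "((\<lambda>h. c_star_splg h / x_splg r \<mu> \<sigma> \<beta> lam h) \<longlongrightarrow> r) at_top \<and>
         ((\<lambda>h. pi_star_splg r \<mu> \<sigma> \<beta> lam h) \<longlongrightarrow>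
           (\<mu> - r) * (1 - lam) powr (root1 r (kappa r \<mu> \<sigma>) - 1) / (r * \<beta> * \<sigma>^2)) at_top"
proof -
  define k where "k = kappa r \<mu> \<sigma>"
  define s where "s = sqrt (1 + 8 * r / k^2)"
  define r1 where "r1 = root1 r k"
  define r2 where "r2 = root2 r k"
  have kpos: "k > 0" using assms by (simp add: k_def kappa_def)
  have s1: "s > 1" unfolding s_def using assms kpos by (simp add: real_less_rsqrt)
  have ss: "s^2 = 1 + 8 * r / k^2" unfolding s_def using assms kpos by simp
  have r1e: "r1 = (1+s)/2" by (simp add: r1_def root1_def s_def)
  have r2e: "r2 = (1-s)/2" by (simp add: r2_def root2_def s_def)
  have d12: "r1 - r2 = s" using r1e r2e by simp
  define g where "g = (r1 - 1) * \<beta>"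
  have gpos: "g > 0" using s1 r1e assms by (simp add: g_def)
  define K5 where "K5 = (1 - r2) * k^2 / (2 * s * \<beta> * r^2)"
  define K6 where "K6 = (1 - lam) powr s / (s * \<beta> * r)"
  define D where "D = lam * (1 - r2) - s"
  define P1 where "P1 = (1 - lam) powr (r1 - 1)"
  define P2 where "P2 = (1 - lam) powr (r2 - 1)"
  define Ea where "Ea = (\<lambda>h::real. exp ((lam - 1) * (r1 - 1) * \<beta> * h))"
  define Eb where "Eb = (\<lambda>h::real. exp ((lam - 1) * (r2 - 1) * \<beta> * h))"
  have C5e: "C5 r \<mu> \<sigma> \<beta> lam h * Ea h = K5 * (1 - exp (- g * h))" for h
  proof -
    have "C5 r \<mu> \<sigma> \<beta> lam h = K5 * (exp ((lam - 1) * (1 - r1) * \<beta> * h) - exp (lam * (1 - r1) * \<beta> * h))"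
      unfolding C5_def Let_def K5_def by (simp add: k_def[symmetric] r1_def[symmetric] r2_def[symmetric] d12)
    moreover have "exp ((lam - 1) * (1 - r1) * \<beta> * h) * Ea h = 1"
      unfolding Ea_def exp_add[symmetric] by (simp add: algebra_simps)
    moreover have "exp (lam * (1 - r1) * \<beta> * h) * Ea h = exp (- g * h)"
      unfolding Ea_def exp_add[symmetric] g_def by (simp add: algebra_simps)
    ultimately show ?thesis by (rule comb5)
  qed
  have C6e: "C6 r \<mu> \<sigma> \<beta> lam h * Eb h = K6 * (1 / (1 - r2) - lam / D * exp (- g * h))" for h
  proof -
    have "C6 r \<mu> \<sigma> \<beta> lam h = K6 * (1 / (1 - r2) * exp ((lam - 1) * (1 - r2) * \<beta> * h)
      - lam / D * exp ((lam * (1 - r2) - s) * \<beta> * h))"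
      unfolding C6_def Let_def K6_def D_def by (simp add: k_def[symmetric] r1_def[symmetric] r2_def[symmetric] d12)
    moreover have "exp ((lam - 1) * (1 - r2) * \<beta> * h) * Eb h = 1"
      unfolding Eb_def exp_add[symmetric] by (simp add: algebra_simps)
    moreover have "exp ((lam * (1 - r2) - s) * \<beta> * h) * Eb h = exp (- g * h)"
      unfolding Eb_def exp_add[symmetric] g_def using d12 by (simp add: algebra_simps)
    ultimately show ?thesis by (rule comb6)
  qed
  have xe: "x_splg r \<mu> \<sigma> \<beta> lam h = h / r + (- r1 * P1 * K5 - r2 * P2 * K6 / (1 - r2))
      + (r1 * P1 * K5 + r2 * P2 * K6 * lam / D) * exp (- g * h)" for h
  proof -
    have "x_splg r \<mu> \<sigma> \<beta> lam h = - r1 * P1 * (C5 r \<mu> \<sigma> \<beta> lam h * Ea h)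
       - r2 * P2 * (C6 r \<mu> \<sigma> \<beta> lam h * Eb h) + h / r"
      unfolding x_splg_def Let_def P1_def P2_def Ea_def Eb_def
      by (simp add: k_def[symmetric] r1_def[symmetric] r2_def[symmetric] algebra_simps)
    then show ?thesis unfolding C5e C6e by (simp add: algebra_simps)
  qed
  have ypow: "((1 - lam) * exp ((lam - 1) * \<beta> * h)) powr (a - 1) = (1 - lam) powr (a - 1) * exp ((lam - 1) * (a - 1) * \<beta> * h)" for a h
    by (simp only: powr_mult exp_powr_real) (simp add: algebra_simps)
  have pe: "pi_star_splg r \<mu> \<sigma> \<beta> lam h = (\<mu> - r) / \<sigma>^2 * (2 * r / k^2) *
      ((P1 * K5 + P2 * K6 / (1 - r2)) + (- P1 * K5 - P2 * K6 * lam / D) * exp (- g * h))" for h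
  proof -
    have "pi_star_splg r \<mu> \<sigma> \<beta> lam h = (\<mu> - r) / \<sigma>^2 * (2 * r / k^2) *
      (P1 * (C5 r \<mu> \<sigma> \<beta> lam h * Ea h) + P2 * (C6 r \<mu> \<sigma> \<beta> lam h * Eb h))"
      unfolding pi_star_splg_def Let_def ypow P1_def P2_def Ea_def Eb_def
      by (simp add: k_def[symmetric] r1_def[symmetric] r2_def[symmetric] algebra_simps)
    then show ?thesis unfolding C5e C6e by (simp add: algebra_simps)
  qed
  have part1: "((\<lambda>h. c_star_splg h / x_splg r \<mu> \<sigma> \<beta> lam h) \<longlongrightarrow> r) at_top"
    unfolding c_star_splg_def xe using lim1[OF assms(1) gpos] by simp
  have val: "(\<mu> - r) / \<sigma>^2 * (2 * r / k^2) * (P1 * K5 + P2 * K6 / (1 - r2))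
      = (\<mu> - r) * P1 / (r * \<beta> * \<sigma>^2)"
  proof -
    have P2K6: "P2 * K6 = P1 / (s * \<beta> * r)"
      unfolding P1_def P2_def K6_def using assms
      by (simp add: powr_add[symmetric] d12[symmetric])
    have nz: "1 - r2 \<noteq> 0" using r2e s1 by simp
    have key: "(1 - r2)^2 + 2 * r / k^2 = s * (1 - r2)"
    proof -
      have rr: "r = (s^2 - 1) * k^2 / 8" unfolding ss using kpos by (simp add: field_simps)
      show ?thesis unfolding r2e rr using kpos by (simp add: field_simps power2_eq_square)
    qed
    have e1: "(1 - r2) + 2 * r / (k^2 * (1 - r2)) = s"
    proof -
      have "(1 - r2) + 2 * r / (k^2 * (1 - r2)) = ((1 - r2)^2 + 2 * r / k^2) / (1 - r2)"
        using nz kpos by (simp add: field_simps power2_eq_square)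
      also have "\<dots> = s" unfolding key using nz by simp
      finally show ?thesis .
    qed
    have e2: "(2 * r / k^2) * (P1 * K5 + P1 / (s * \<beta> * r) / (1 - r2))
        = P1 / (s * \<beta> * r) * ((1 - r2) + 2 * r / (k^2 * (1 - r2)))"
      unfolding K5_def using nz kpos s1 assms by (simp add: field_simps power2_eq_square)
    have "(\<mu> - r) / \<sigma>^2 * (2 * r / k^2) * (P1 * K5 + P2 * K6 / (1 - r2))
        = (\<mu> - r) / \<sigma>^2 * (P1 / (s * \<beta> * r) * s)"
      unfolding P2K6 e2[symmetric, unfolded e1] by (simp add: e2[unfolded e1])
    also have "\<dots> = (\<mu> - r) * P1 / (r * \<beta> * \<sigma>^2)" using s1 by simp
    finally show ?thesis .
  qed
  have part2: "((\<lambda>h. pi_star_splg r \<mu> \<sigma> \<beta> lam h) \<longlongrightarrow>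
           (\<mu> - r) * (1 - lam) powr (root1 r (kappa r \<mu> \<sigma>) - 1) / (r * \<beta> * \<sigma>^2)) at_top"
    unfolding pe using tendsto_mult_left[OF lim2[OF gpos], of "(\<mu> - r) / \<sigma>^2 * (2 * r / k^2)"
        "P1 * K5 + P2 * K6 / (1 - r2)" "- P1 * K5 - P2 * K6 * lam / D"]
    unfolding val by (simp add: P1_def r1_def k_def)
  show ?thesis using part1 part2 by blast
qed

end
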